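(* Suppose that $X(\mathbb{R}^n)$ is a translation-invariant Banach function space. If $w(x):=e^{c|x|}$ for $x\in\mathbb{R}^n$ with a constant $c>0$, then the weighted Banach function space $X(\mathbb{R}^n,w)$ does not satisfy the weak doubling property.
   Context: Banach function spaces: let $\mathfrak{M}^+(\mathbb{R}^n)$ be the set of measurable functions with values in $[0,\infty]$. A Banach function norm $\rho:\mathfrak{M}^+\to[0,\infty]$ satisfies, for all $f,g,f_j\in\mathfrak{M}^+$, $a\ge0$, measurable $E$: (A1) $\rho(f)=0\iff f=0$ a.e., $\rho(af)=a\rho(f)$, $\rho(f+g)\le\rho(f)+\rho(g)$; (A2) $0\le g\le f$ a.e. implies $\rho(g)\le\rho(f)$; (A3) $0\le f_j\uparrow f$ a.e. implies $\rho(f_j)\uparrow\rho(f)$; (A4) $|E|<\infty$ implies $\rho(\chi_E)<\infty$; (A5) $|E|<\infty$ implies $\int_Ef\le C_E\rho(f)$ with $C_E$ independent of $f$. $X(\mathbb{R}^n)$ is the set of measurable complex $f$ with $\rho(|f|)<\infty$, $\|f\|_X=\rho(|f|)$. $X$ is translation-invariant if $\|u(\cdot-y)\|_X=\|u\|_X$ for all $y\in\mathbb{R}^n$, $u\in X$. For a weight $w$, $X(\mathbb{R}^n,w)=\{f: fw\in X\}$ with $\|f\|_{X(\mathbb{R}^n,w)}=\|fw\|_X$. Weak doubling property: a Banach function space $Z(\mathbb{R}^n)$ has it if there is $\tau>1$ with $\liminf_{R\to\infty}\big(\inf_{y\in\mathbb{R}^n}\|\chi_{B(y,\tau R)}\|_{Z}/\|\chi_{B(y,R)}\|_{Z}\big)<\infty$,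 where $B(y,R)$ is the open ball of radius $R$ centered at $y$. *)

theory Defs
  imports "HOL-Analysis.Analysis"
begin

text \<open>A Banach function norm on nonnegative (extended) measurable functions on a
Euclidean space 'a (playing the role of R^n), axioms (A1)-(A5) w.r.t. Lebesgue measure.\<close>

definition banach_function_norm :: "(('a::euclidean_space \<Rightarrow> ennreal) \<Rightarrow> ennreal) \<Rightarrow> bool" where
  "banach_function_norm \<rho> \<longleftrightarrow>
     \<comment> \<open>(A1)\<close>
     (\<forall>f \<in> borel_measurable lebesgue. \<rho> f = 0 \<longleftrightarrow> (AE x in lebesgue. f x = 0)) \<and>
     (\<forall>f \<in> borel_measurable lebesgue. \<forall>a::real. a \<ge> 0 \<longrightarrow>
        \<rho> (\<lambda>x. ennreal a * f x) = ennreal a * \<rho> f) \<and>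
     (\<forall>f \<in> borel_measurable lebesgue. \<forall>g \<in> borel_measurable lebesgue.
        \<rho> (\<lambda>x. f x + g x) \<le> \<rho> f + \<rho> g) \<and>
     \<comment> \<open>(A2)\<close>
     (\<forall>f \<in> borel_measurable lebesgue. \<forall>g \<in> borel_measurable lebesgue.
        (AE x in lebesgue. g x \<le> f x) \<longrightarrow> \<rho> g \<le> \<rho> f) \<and>
     \<comment> \<open>(A3)\<close>
     (\<forall>F f. (\<forall>j. F j \<in> borel_measurable lebesgue) \<longrightarrow> f \<in> borel_measurable lebesgue \<longrightarrow>
        (AE x in lebesgue. incseq (\<lambda>j. F j x) \<and> (\<lambda>j. F j x) \<longlonglongrightarrow> f x) \<longrightarrow>
        incseq (\<lambda>j. \<rho> (F j)) \<and> (\<lambda>j. \<rho> (F j)) \<longlonglongrightarrow> \<rho> f) \<and>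
     \<comment> \<open>(A4)\<close>
     (\<forall>E \<in> sets lebesgue. emeasure lebesgue E < \<infinity> \<longrightarrow> \<rho> (indicator E) < \<infinity>) \<and>
     \<comment> \<open>(A5)\<close>
     (\<forall>E \<in> sets lebesgue. emeasure lebesgue E < \<infinity> \<longrightarrow>
        (\<exists>C::real. \<forall>f \<in> borel_measurable lebesgue.
            (\<integral>\<^sup>+ x \<in> E. f x \<partial>lebesgue) \<le> ennreal C * \<rho> f))"

definition bfs_norm :: "(('a::euclidean_space \<Rightarrow> ennreal) \<Rightarrow> ennreal) \<Rightarrow> ('a \<Rightarrow> complex) \<Rightarrow> ennreal" where
  "bfs_norm \<rho> f = \<rho> (\<lambda>x. ennreal (cmod (f x)))"

definition bfs :: "(('a::euclidean_space \<Rightarrow> ennreal) \<Rightarrow> ennreal) \<Rightarrow> ('a \<Rightarrow> complex) set" where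
  "bfs \<rho> = {f \<in> borel_measurable lebesgue. bfs_norm \<rho> f < \<infinity>}"

definition translation_invariant :: "(('a::euclidean_space \<Rightarrow> ennreal) \<Rightarrow> ennreal) \<Rightarrow> bool" where
  "translation_invariant \<rho> \<longleftrightarrow>
     (\<forall>u \<in> bfs \<rho>. \<forall>y. bfs_norm \<rho> (\<lambda>x. u (x - y)) = bfs_norm \<rho> u)"

definition weighted_norm ::
  "(('a::euclidean_space \<Rightarrow> ennreal) \<Rightarrow> ennreal) \<Rightarrow> ('a \<Rightarrow> real) \<Rightarrow> ('a \<Rightarrow> complex) \<Rightarrow> ennreal" where
  "weighted_norm \<rho> w f = bfs_norm \<rho> (\<lambda>x. f x * complex_of_real (w x))"

definition weak_doubling :: "(('a::euclidean_space \<Rightarrow> complex) \<Rightarrow> ennreal) \<Rightarrow> bool" where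
  "weak_doubling nZ \<longleftrightarrow>
     (\<exists>\<tau>::real. \<tau> > 1 \<and>
        Liminf at_top (\<lambda>R::real. INF y. nZ (indicator (ball y (\<tau> * R))) / nZ (indicator (ball y R))) < \<infinity>)"

end

theory Submission
  imports Defs
begin

lemma bfn_mono:
  assumes "banach_function_norm \<rho>" "f \<in> borel_measurable lebesgue" "g \<in> borel_measurable lebesgue"
    "\<And>x. g x \<le> f x"
  shows "\<rho> g \<le> \<rho> f"
  using assms unfolding banach_function_norm_def by (meson AE_I2)

lemma bfn_hom:
  assumes "banach_function_norm \<rho>" "f \<in> borel_measurable lebesgue" "a \<ge> 0"
  shows "\<rho> (\<lambda>x. ennreal a * f x) = ennreal a * \<rho> f"
  using assms unfolding banach_function_norm_def by blast

lemma bfn_zero: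
  assumes "banach_function_norm \<rho>"
  shows "\<rho> (\<lambda>x. 0) = 0"
  using assms unfolding banach_function_norm_def by auto

lemma bfn_sum:
  assumes "banach_function_norm \<rho>" "finite F" "\<And>i. i \<in> F \<Longrightarrow> f i \<in> borel_measurable lebesgue"
  shows "\<rho> (\<lambda>x. \<Sum>i\<in>F. f i x) \<le> (\<Sum>i\<in>F. \<rho> (f i))"
  using assms(2,3)
proof (induction F rule: finite_induct)
  case empty
  then show ?case using bfn_zero[OF assms(1)] by simp
next
  case (insert i F)
  have m: "(\<lambda>x. \<Sum>i\<in>F. f i x) \<in> borel_measurable lebesgue"
    using insert by (intro borel_measurable_sum) auto
  have "\<rho> (\<lambda>x. \<Sum>i\<in>insert i F. f i x) = \<rho> (\<lambda>x. f i x + (\<Sum>i\<in>F. f i x))"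
    using insert by simp
  also have "\<dots> \<le> \<rho> (f i) + \<rho> (\<lambda>x. \<Sum>i\<in>F. f i x)"
  proof -
    have "f i \<in> borel_measurable lebesgue" using insert by simp
    moreover have "\<forall>f \<in> borel_measurable lebesgue. \<forall>g \<in> borel_measurable lebesgue.
        \<rho> (\<lambda>x. f x + g x) \<le> \<rho> f + \<rho> g" using assms(1) unfolding banach_function_norm_def by blast
    ultimately show ?thesis using m by (simp add: Ball_def)
  qed
  also have "\<dots> \<le> \<rho> (f i) + (\<Sum>i\<in>F. \<rho> (f i))"
    using insert by (intro add_left_mono) auto
  finally show ?case using insert by simp
qed

lemma ball_lebesgue[measurable]: "ball (y::'a::euclidean_space) r \<in> sets lebesgue"
  using lmeasurable_ball fmeasurable_def by blast

lemma exp_meas[measurable]: "(\<lambda>x::'a::euclidean_space. exp (c * norm x)) \<in> borel_measurable lebesgue"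
proof -
  have "(\<lambda>x::'a. exp (c * norm x)) \<in> borel_measurable borel"
    by (intro borel_measurable_continuous_onI continuous_intros)
  then show ?thesis by (simp add: measurable_completion)
qed

lemma ind_meas: "(indicator (ball y r) :: 'a::euclidean_space \<Rightarrow> ennreal) \<in> borel_measurable lebesgue"
  by measurable

lemma w_meas: "(\<lambda>x. ennreal (indicator (ball y r) x * exp (c * norm x)) :: ennreal)
     \<in> borel_measurable (lebesgue :: 'a::euclidean_space measure)"
  by measurable

lemma ball_fin:
  assumes "banach_function_norm \<rho>"
  shows "\<rho> (indicator (ball (y::'a::euclidean_space) r)) < \<infinity>"
proof -
  have "emeasure lebesgue (ball y r) < \<infinity>"
    using emeasure_lborel_ball_finite[of y r] by simp
  then show ?thesis using assms unfolding banach_function_norm_def by auto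
qed

lemma ball_pos:
  assumes "banach_function_norm \<rho>" "r > 0"
  shows "\<rho> (indicator (ball (y::'a::euclidean_space) r)) > 0"
proof (rule ccontr)
  assume "\<not> ?thesis"
  then have "\<rho> (indicator (ball y r)) = 0" by (simp add: not_gr_zero)
  then have "AE x in lebesgue. (indicator (ball y r) x :: ennreal) = 0"
    using assms(1) ind_meas unfolding banach_function_norm_def by blast
  then have "emeasure lebesgue (ball y r) = 0"
    by (subst (asm) AE_iff_measurable[of "ball y r"]) (auto simp: indicator_def)
  then have "emeasure lborel (ball y r) = 0" by simp
  then have "measure lborel (ball y r) = 0" by (simp add: measure_def)
  then show False using content_ball_pos[OF assms(2), of y] by simp
qed

lemma cover:
  assumes "(a::real) > 0"
  shows "\<exists>F. finite F \<and> F \<noteq> {} \<and> (\<forall>R>0. ball (0::'a::euclidean_space) R \<subseteq> (\<Union>x\<in>F. ball (R *\<^sub>R x) (a * R)))"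
proof -
  have tb: "\<forall>e>0. \<exists>k. finite k \<and> k \<subseteq> cball (0::'a) 1 \<and> cball (0::'a) 1 \<subseteq> (\<Union>x\<in>k. ball x e)"
    by (rule seq_compact_imp_totally_bounded[OF compact_imp_seq_compact[OF compact_cball]])
  then obtain F where F: "finite F" "cball (0::'a) 1 \<subseteq> (\<Union>x\<in>F. ball x a)"
    using assms by meson
  have "(0::'a) \<in> cball 0 1" by simp
  then have "F \<noteq> {}" using F(2) by auto
  moreover have "ball (0::'a) R \<subseteq> (\<Union>x\<in>F. ball (R *\<^sub>R x) (a * R))" if R: "R > 0" for R
  proof
    fix v :: 'a assume "v \<in> ball 0 R"
    then have "norm v < R" by simp
    then have "norm ((1/R) *\<^sub>R v) \<le> 1" using R by (simp add: field_simps)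
    then have "(1/R) *\<^sub>R v \<in> cball 0 1" by simp
    then have "(1/R) *\<^sub>R v \<in> (\<Union>x\<in>F. ball x a)" using F(2) by (rule subsetD[rotated])
    then obtain x where x: "x \<in> F" "dist x ((1/R) *\<^sub>R v) < a" by (auto simp: ball_def)
    have eq: "R *\<^sub>R x - v = R *\<^sub>R (x - (1/R) *\<^sub>R v)" using R by (simp add: algebra_simps)
    have "dist (R *\<^sub>R x) v = R * dist x ((1/R) *\<^sub>R v)"
      unfolding dist_norm eq using R by simp
    also have "\<dots> < a * R" using x R by simp
    finally have "v \<in> ball (R *\<^sub>R x) (a * R)" by (simp add: ball_def)
    then show "v \<in> (\<Union>x\<in>F. ball (R *\<^sub>R x) (a * R))" using x(1) by blast
  qed
  ultimately show ?thesis using F(1) by blast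
qed

lemma transl:
  assumes "banach_function_norm \<rho>" "translation_invariant \<rho>"
  shows "\<rho> (indicator (ball (y::'a::euclidean_space) r)) = \<rho> (indicator (ball 0 r))"
proof -
  have e: "(\<lambda>x. ennreal (cmod (indicator A x :: complex))) = indicator A" for A :: "'a set"
    by (auto simp: fun_eq_iff indicator_def)
  let ?u = "indicator (ball 0 r) :: 'a \<Rightarrow> complex"
  have "?u \<in> bfs \<rho>"
    unfolding bfs_def bfs_norm_def using ball_fin[OF assms(1), of 0 r] e[of "ball 0 r"] by (auto intro: borel_measurable_indicator)
  then have "bfs_norm \<rho> (\<lambda>x. ?u (x - y)) = bfs_norm \<rho> ?u"
    using assms(2) unfolding translation_invariant_def by blast
  moreover have "(\<lambda>x. ennreal (cmod (?u (x - y)))) = indicator (ball y r)"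
    by (auto simp: fun_eq_iff indicator_def dist_norm norm_minus_commute)
  ultimately show ?thesis unfolding bfs_norm_def using e[of "ball 0 r"] by simp
qed


lemma unit_dir:
  fixes y :: "'a::euclidean_space"
  obtains u where "norm u = 1" "\<And>t. t \<ge> 0 \<Longrightarrow> norm (y + t *\<^sub>R u) = norm y + t"
proof (cases "y = 0")
  case True
  obtain b :: 'a where "b \<in> Basis" using nonempty_Basis by blast
  then have "norm b = 1" by simp
  then show ?thesis using that[of b] True by simp
next
  case False
  let ?u = "(1 / norm y) *\<^sub>R y"
  have "norm ?u = 1" using False by simp
  moreover have "norm (y + t *\<^sub>R ?u) = norm y + t" if "t \<ge> 0" for t
  proof -
    have "y + t *\<^sub>R ?u = (1 + t / norm y) *\<^sub>R y" using False by (simp add: algebra_simps)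
    then have "norm (y + t *\<^sub>R ?u) = (1 + t / norm y) * norm y"
      using that False by (simp add: abs_of_nonneg)
    also have "\<dots> = norm y + t" using False by (simp add: field_simps)
    finally show ?thesis .
  qed
  ultimately show ?thesis using that by blast
qed

lemma geom:
  fixes y :: "'a::euclidean_space"
  assumes "R > 0" "a > 0" "\<tau> \<ge> 1 + 4 * a"
  obtains z where "ball z (a * R) \<subseteq> ball y (\<tau> * R)"
    "\<And>x. x \<in> ball z (a * R) \<Longrightarrow> norm y + R + a * R \<le> norm x"
proof -
  obtain u where u: "norm u = 1" "\<And>t. t \<ge> 0 \<Longrightarrow> norm (y + t *\<^sub>R u) = norm y + t"
    using unit_dir by blast
  define z where "z = y + (R + 2 * a * R) *\<^sub>R u"
  have nz: "norm z = norm y + (R + 2 * a * R)" unfolding z_def using u assms by simp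
  have dz: "dist y z = R + 2 * a * R" unfolding z_def dist_norm using u assms by simp
  have "ball z (a * R) \<subseteq> ball y (\<tau> * R)"
  proof
    fix x assume "x \<in> ball z (a * R)"
    then have "dist z x < a * R" by simp
    then have "dist y x < R + 3 * a * R" using dist_triangle[of y x z] dz by linarith
    also have "\<dots> \<le> \<tau> * R"
    proof -
      have "(1 + 4*a) * R \<le> \<tau> * R" using assms by (intro mult_right_mono) auto
      moreover have "0 \<le> a * R" using assms by simp
      ultimately show ?thesis by (simp add: algebra_simps)
    qed
    finally show "x \<in> ball y (\<tau> * R)" by simp
  qed
  moreover have "norm y + R + a * R \<le> norm x" if "x \<in> ball z (a * R)" for x
  proof -
    have "dist z x < a * R" using that by simp
    moreover have "norm z \<le> norm x + dist z x"
      using norm_triangle_ineq[of x "z - x"] by (simp add: dist_norm norm_minus_commute)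
    ultimately show ?thesis using nz by linarith
  qed
  ultimately show ?thesis using that by blast
qed

lemma wn_eq:
  "weighted_norm \<rho> (\<lambda>x. exp (c * norm x)) (indicator A) =
     \<rho> (\<lambda>x. ennreal (indicator A x * exp (c * norm (x::'a::euclidean_space))))"
  unfolding weighted_norm_def bfs_norm_def
  by (rule arg_cong[where f=\<rho>]) (auto simp: fun_eq_iff indicator_def norm_mult)


theorem theorem3p7:
  fixes \<rho> :: "('a::euclidean_space \<Rightarrow> ennreal) \<Rightarrow> ennreal" and c :: real
  assumes "banach_function_norm \<rho>"
    and "translation_invariant \<rho>"
    and "c > 0"
  shows "\<not> weak_doubling (weighted_norm \<rho> (\<lambda>x. exp (c * norm x)))"
proof
  let ?nZ = "weighted_norm \<rho> (\<lambda>x. exp (c * norm x))"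
  assume "weak_doubling ?nZ"
  then obtain \<tau> :: real where \<tau>: "\<tau> > 1"
    and L: "Liminf at_top (\<lambda>R::real. INF y. ?nZ (indicator (ball y (\<tau> * R))) / ?nZ (indicator (ball y R))) < \<infinity>"
    unfolding weak_doubling_def by blast
  define a :: real where "a = (\<tau> - 1) / 4"
  have a4: "1 + 4 * a = \<tau>" unfolding a_def by (simp add: field_simps)
  have a: "a > 0" "\<tau> \<ge> 1 + 4 * a" using \<tau> a4 by (auto simp: a_def)
  obtain F :: "'a set" where F: "finite F" "F \<noteq> {}"
    "\<And>R. R > 0 \<Longrightarrow> ball (0::'a) R \<subseteq> (\<Union>x\<in>F. ball (R *\<^sub>R x) (a * R))"
    using cover[OF a(1)] by blast
  define N where "N = card F"
  have N: "N \<ge> 1" using F by (simp add: N_def Suc_le_eq card_gt_0_iff)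
  have key: "ennreal (exp (c * a * R) / N) \<le> ?nZ (indicator (ball y (\<tau> * R))) / ?nZ (indicator (ball y R))"
    if R: "R > 0" for R y
  proof -
    define \<phi> where "\<phi> = \<rho> (indicator (ball (0::'a) (a * R)))"
    have aR: "a * R > 0" using a R by simp
    have \<phi>pos: "\<phi> > 0" unfolding \<phi>_def using ball_pos[OF assms(1) aR] .
    have \<phi>fin: "\<phi> < \<infinity>" unfolding \<phi>_def using ball_fin[OF assms(1)] .
    obtain p where p: "\<phi> = ennreal p" "p > 0"
      using \<phi>pos \<phi>fin by (cases \<phi>) (auto simp: ennreal_less_iff)
    define E1 where "E1 = exp (c * (norm y + R + a * R))"
    define E2 where "E2 = exp (c * (norm y + R))"
    have E: "E1 > 0" "E2 > 0" by (auto simp: E1_def E2_def)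
    obtain z where z: "ball z (a * R) \<subseteq> ball y (\<tau> * R)"
      "\<And>x. x \<in> ball z (a * R) \<Longrightarrow> norm y + R + a * R \<le> norm x"
      using geom[OF R a(1) a(2)] by blast
    have num: "ennreal (E1 * p) \<le> ?nZ (indicator (ball y (\<tau> * R)))"
    proof -
      have "ennreal (E1 * p) = ennreal E1 * \<rho> (indicator (ball z (a * R)))"
        using p transl[OF assms(1,2), of z "a * R"] E by (simp add: \<phi>_def ennreal_mult)
      also have "\<dots> = \<rho> (\<lambda>x. ennreal E1 * indicator (ball z (a * R)) x)"
        using bfn_hom[OF assms(1) ind_meas, of E1 z "a * R"] E by simp
      also have "\<dots> \<le> \<rho> (\<lambda>x. ennreal (indicator (ball y (\<tau> * R)) x * exp (c * norm x)))"
      proof (rule bfn_mono[OF assms(1)])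
        show "(\<lambda>x. ennreal E1 * indicator (ball z (a * R)) x) \<in> borel_measurable lebesgue"
          by measurable
        show "(\<lambda>x. ennreal (indicator (ball y (\<tau> * R)) x * exp (c * norm x))) \<in> borel_measurable lebesgue"
          by measurable
        fix x
        show "ennreal E1 * indicator (ball z (a * R)) x \<le> ennreal (indicator (ball y (\<tau> * R)) x * exp (c * norm x))"
        proof (cases "x \<in> ball z (a * R)")
          case True
          then have "x \<in> ball y (\<tau> * R)" using z(1) by blast
          moreover have "E1 \<le> exp (c * norm x)"
            unfolding E1_def using z(2)[OF True] assms(3) by simp
          ultimately show ?thesis using True by (simp add: ennreal_leI)
        qed simp
      qed
      finally show ?thesis using wn_eq by metis
    qed
    have covsum: "\<rho> (indicator (ball (0::'a) R)) \<le> of_nat N * \<phi>"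
    proof -
      have "\<rho> (indicator (ball (0::'a) R)) \<le> \<rho> (\<lambda>x. \<Sum>i\<in>F. indicator (ball (R *\<^sub>R i) (a * R)) x)"
      proof (rule bfn_mono[OF assms(1)])
        show "(\<lambda>x. \<Sum>i\<in>F. indicator (ball (R *\<^sub>R i) (a * R)) x :: ennreal) \<in> borel_measurable lebesgue"
          by measurable
        show "(indicator (ball (0::'a) R) :: 'a \<Rightarrow> ennreal) \<in> borel_measurable lebesgue"
          by (rule ind_meas)
        fix x :: 'a
        show "indicator (ball 0 R) x \<le> (\<Sum>i\<in>F. indicator (ball (R *\<^sub>R i) (a * R)) x :: ennreal)"
        proof (cases "x \<in> ball 0 R")
          case True
          then obtain i where i: "i \<in> F" "x \<in> ball (R *\<^sub>R i) (a * R)" using F(3)[OF R] by blast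
          then have "(indicator (ball (R *\<^sub>R i) (a * R)) x :: ennreal) \<le> (\<Sum>i\<in>F. indicator (ball (R *\<^sub>R i) (a * R)) x)"
            using F(1) by (intro member_le_sum) auto
          then show ?thesis using True i by simp
        qed simp
      qed
      also have "\<dots> \<le> (\<Sum>i\<in>F. \<rho> (indicator (ball (R *\<^sub>R i) (a * R))))"
        using bfn_sum[OF assms(1) F(1), of "\<lambda>i. indicator (ball (R *\<^sub>R i) (a * R))"] ind_meas
        by blast
      also have "\<dots> = (\<Sum>i\<in>F. \<phi>)"
        unfolding \<phi>_def by (rule sum.cong[OF refl]) (rule transl[OF assms(1,2)])
      also have "\<dots> = of_nat N * \<phi>" by (simp add: N_def)
      finally show ?thesis .
    qed
    have den_up: "?nZ (indicator (ball y R)) \<le> ennreal (E2 * N * p)"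
    proof -
      have "?nZ (indicator (ball y R)) = \<rho> (\<lambda>x. ennreal (indicator (ball y R) x * exp (c * norm x)))"
        by (rule wn_eq)
      also have "\<dots> \<le> \<rho> (\<lambda>x. ennreal E2 * indicator (ball y R) x)"
      proof (rule bfn_mono[OF assms(1)])
        show "(\<lambda>x. ennreal E2 * indicator (ball y R) x) \<in> borel_measurable lebesgue"
          by measurable
        show "(\<lambda>x. ennreal (indicator (ball y R) x * exp (c * norm x))) \<in> borel_measurable lebesgue"
          by measurable
        fix x
        show "ennreal (indicator (ball y R) x * exp (c * norm x)) \<le> ennreal E2 * indicator (ball y R) x"
        proof (cases "x \<in> ball y R")
          case True
          then have "norm x \<le> norm y + R"
            using norm_triangle_ineq[of y "x - y"] by (simp add: dist_norm norm_minus_commute)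
          then have "exp (c * norm x) \<le> E2" unfolding E2_def using assms(3) by simp
          then show ?thesis using True by (simp add: ennreal_leI)
        qed simp
      qed
      also have "\<dots> = ennreal E2 * \<rho> (indicator (ball y R))"
        using bfn_hom[OF assms(1) ind_meas, of E2 y R] E by simp
      also have "\<dots> = ennreal E2 * \<rho> (indicator (ball 0 R))"
        using transl[OF assms(1,2), of y R] by simp
      also have "\<dots> \<le> ennreal E2 * (of_nat N * \<phi>)"
        using covsum by (intro mult_left_mono) auto
      also have "\<dots> = ennreal (E2 * N * p)"
        using p E by (simp add: ennreal_mult ennreal_of_nat_eq_real_of_nat mult.assoc)
      finally show ?thesis .
    qed
    have den_pos: "?nZ (indicator (ball y R)) > 0"
    proof -
      have "0 < \<rho> (indicator (ball y R))" using ball_pos[OF assms(1) R] .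
      also have "\<dots> \<le> \<rho> (\<lambda>x. ennreal (indicator (ball y R) x * exp (c * norm x)))"
      proof (rule bfn_mono[OF assms(1)])
        show "(\<lambda>x. ennreal (indicator (ball y R) x * exp (c * norm x))) \<in> borel_measurable lebesgue"
          by measurable
        show "(indicator (ball y R) :: 'a \<Rightarrow> ennreal) \<in> borel_measurable lebesgue"
          by (rule ind_meas)
        fix x :: 'a
        have "1 \<le> exp (c * norm x)" using assms(3) by simp
        then show "indicator (ball y R) x \<le> ennreal (indicator (ball y R) x * exp (c * norm x))"
          by (auto simp: indicator_def ennreal_leI)
      qed
      finally show ?thesis using wn_eq by metis
    qed
    obtain d where d: "?nZ (indicator (ball y R)) = ennreal d" "d > 0" "d \<le> E2 * N * p"
    proof -
      have "?nZ (indicator (ball y R)) < \<infinity>" using den_up by (simp add: le_less_trans)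
      then obtain d where "?nZ (indicator (ball y R)) = ennreal d" "d \<ge> 0"
        by (cases "?nZ (indicator (ball y R))") auto
      moreover have "d > 0" using den_pos calculation by (simp add: ennreal_less_iff)
      moreover have "d \<le> E2 * N * p" using den_up calculation E p N
        by (simp add: ennreal_le_iff)
      ultimately show ?thesis using that by blast
    qed
    have "ennreal (exp (c * a * R) / N) = ennreal (E1 * p / (E2 * N * p))"
    proof -
      have "E1 = exp (c * a * R) * E2" unfolding E1_def E2_def by (simp add: exp_add[symmetric] algebra_simps)
      then show ?thesis using p E N by (simp add: field_simps)
    qed
    also have "\<dots> \<le> ennreal (E1 * p / d)"
      using d E p N by (intro ennreal_leI frac_le) auto
    also have "\<dots> = ennreal (E1 * p) / ennreal d"
      using d E p by (simp add: divide_ennreal)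
    also have "\<dots> \<le> ?nZ (indicator (ball y (\<tau> * R))) / ennreal d"
      by (rule divide_right_mono_ennreal[OF num])
    finally show ?thesis using d(1) by simp
  qed
  have "\<infinity> \<le> Liminf at_top (\<lambda>R::real. INF y. ?nZ (indicator (ball y (\<tau> * R))) / ?nZ (indicator (ball y R)))"
    unfolding le_Liminf_iff
  proof (intro allI impI)
    fix t :: ennreal assume "t < \<infinity>"
    then obtain t' where t': "t = ennreal t'" "t' \<ge> 0" by (cases t) auto
    have ev: "eventually (\<lambda>R. R \<ge> max 1 (t' * N / (c * a) + 1)) at_top"
      by (rule eventually_ge_at_top)
    show "eventually (\<lambda>R. t < (INF y. ?nZ (indicator (ball y (\<tau> * R))) / ?nZ (indicator (ball y R)))) at_top"
    proof (rule eventually_mono[OF ev])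
      fix R :: real assume R: "R \<ge> max 1 (t' * N / (c * a) + 1)"
      have ca: "c * a > 0" using assms(3) a by simp
      have "t' * N / (c * a) < R" using R by simp
      then have "t' * N < c * a * R" using ca by (simp add: field_simps)
      also have "\<dots> < exp (c * a * R)"
        using exp_ge_add_one_self[of "c * a * R"] by linarith
      finally have "t' < exp (c * a * R) / N" using N by (simp add: field_simps)
      then have "t < ennreal (exp (c * a * R) / N)" using t' by (simp add: ennreal_less_iff)
      also have "\<dots> \<le> (INF y. ?nZ (indicator (ball y (\<tau> * R))) / ?nZ (indicator (ball y R)))"
        using key R by (intro INF_greatest) auto
      finally show "t < (INF y. ?nZ (indicator (ball y (\<tau> * R))) / ?nZ (indicator (ball y R)))" .
    qed
  qed
  then show False using L by simp
qed

end
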